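(* Let $G_n=H_0H_1\cdots H_{n-1}$ be a spiro hexagonal chain with $n$ hexagons, and let $c_k$ be the common cut-vertex of $H_{k-1}$ and $H_k$, $1\le k\le n-1$. Then $$W(G_n)=5\sum_{k=1}^{n-1}\sum_{i=1}^{k}f(c_i)+\frac{45}{2}n^2+\frac{9}{2}n=5\sum_{k=1}^{n-1}(n-k)f(c_k)+\frac{45}{2}n^2+\frac{9}{2}n,$$ where $f(c_1)=9$ and, for $k\ge2$, $f(c_k)=5(k-1)+9$ if $c_k$ is $o_{k-1}$, $f(c_k)=10(k-1)+9$ if $c_k$ is $m_{k-1}$, and $f(c_k)=15(k-1)+9$ if $c_k$ is $p_{k-1}$.
   Context: All graphs are simple and connected; $d(u,v)$ is the shortest-path distance, and the Wiener index is $W(G)=\sum_{\{u,v\}\subseteq V(G)}d_G(u,v)$. A spiro hexagonal chain of length $n$, $G_n=H_0H_1\cdots H_{n-1}$, is a connected graph in which every block is a hexagon (6-cycle) $H_0,\dots,H_{n-1}$, each hexagon has at most two cut-vertices, each cut-vertex is shared by exactly two hexagons, and for $k=1,\dots,n-1$ the hexagons $H_{k-1}$ and $H_k$ share the cut-vertex $c_k$. For $k\ge1$, a vertex of $H_k$ at distance $1$, $2$, $3$ from $c_k$ is called an ortho-, meta-, para-vertex of $H_k$, denoted $o_k,m_k,p_k$ respectively. For $2\le k\le n-1$, $c_k$ is a vertex of $H_{k-1}$ different from $c_{k-1}$, hence one of $o_{k-1},m_{k-1},p_{k-1}$. *)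

theory Defs
  imports Main "HOL.Real"
begin

fun is_walk :: "('a \<Rightarrow> 'a \<Rightarrow> bool) \<Rightarrow> 'a list \<Rightarrow> bool" where
  "is_walk adj [] = False"
| "is_walk adj [x] = True"
| "is_walk adj (x # y # xs) = (adj x y \<and> is_walk adj (y # xs))"

definition dist :: "('a \<Rightarrow> 'a \<Rightarrow> bool) \<Rightarrow> 'a \<Rightarrow> 'a \<Rightarrow> nat" where
  "dist adj u v = (LEAST m. \<exists>xs. is_walk adj xs \<and> hd xs = u \<and> last xs = v \<and> length xs = m + 1)"

text \<open>Wiener index: sum of d(u,v) over unordered pairs {u,v} of distinct vertices.\<close>
definition wiener :: "'a set \<Rightarrow> ('a \<Rightarrow> 'a \<Rightarrow> bool) \<Rightarrow> real" where
  "wiener V adj = (\<Sum>P\<in>{P. \<exists>u\<in>V. \<exists>v\<in>V. u \<noteq> v \<and> P = {u, v}}.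
                      real (dist adj (SOME u. u \<in> P) (SOME v. v \<in> P - {SOME u. u \<in> P})))"

definition spiro_hex_chain ::
  "'a set \<Rightarrow> ('a \<Rightarrow> 'a \<Rightarrow> bool) \<Rightarrow> nat \<Rightarrow> (nat \<Rightarrow> nat \<Rightarrow> 'a) \<Rightarrow> (nat \<Rightarrow> 'a) \<Rightarrow> bool" where
  "spiro_hex_chain V adj n H c \<longleftrightarrow>
     n \<ge> 1 \<and>
     (\<forall>k<n. inj_on (H k) {..<6}) \<and>
     V = (\<Union>k<n. H k ` {..<6}) \<and>
     (\<forall>u v. adj u v \<longleftrightarrow> (\<exists>k<n. \<exists>i<6. {u, v} = {H k i, H k ((i + 1) mod 6)})) \<and>
     (\<forall>k. 1 \<le> k \<and> k < n \<longrightarrow> H (k - 1) ` {..<6} \<inter> H k ` {..<6} = {c k}) \<and>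
     (\<forall>j k. j < n \<and> k < n \<and> j + 2 \<le> k \<longrightarrow> H j ` {..<6} \<inter> H k ` {..<6} = {})"

text \<open>The weight f(c_k): f(c_1) = 9; for k \<ge> 2, c_k is the ortho/meta/para vertex of H_{k-1}
  according as its distance from c_{k-1} is 1/2/3.\<close>
definition fc :: "('a \<Rightarrow> 'a \<Rightarrow> bool) \<Rightarrow> (nat \<Rightarrow> 'a) \<Rightarrow> nat \<Rightarrow> real" where
  "fc adj c k =
     (if k = 1 then 9
      else if dist adj (c (k - 1)) (c k) = 1 then 5 * (real k - 1) + 9
      else if dist adj (c (k - 1)) (c k) = 2 then 10 * (real k - 1) + 9
      else if dist adj (c (k - 1)) (c k) = 3 then 15 * (real k - 1) + 9
      else undefined)"

end

theory Submission
  imports Defs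
begin



definition reach :: "('a \<Rightarrow> 'a \<Rightarrow> bool) \<Rightarrow> 'a \<Rightarrow> 'a \<Rightarrow> bool" where
  "reach R u v = (\<exists>xs. is_walk R xs \<and> hd xs = u \<and> last xs = v)"

lemma walk_nonempty: "is_walk R xs \<Longrightarrow> xs \<noteq> []"
  by (cases xs) auto

lemma dist_le:
  assumes "is_walk R xs" "hd xs = u" "last xs = v"
  shows "dist R u v \<le> length xs - 1"
proof -
  have "xs \<noteq> []" using assms(1) by (rule walk_nonempty)
  then have "\<exists>ys. is_walk R ys \<and> hd ys = u \<and> last ys = v \<and> length ys = (length xs - 1) + 1"
    using assms by (intro exI[of _ xs]) auto
  then show ?thesis unfolding dist_def by (rule Least_le)
qed

lemma dist_ex:
  assumes "reach R u v"
  shows "\<exists>xs. is_walk R xs \<and> hd xs = u \<and> last xs = v \<and> length xs = dist R u v + 1"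
proof -
  obtain xs where xs: "is_walk R xs" "hd xs = u" "last xs = v" using assms unfolding reach_def by blast
  have "xs \<noteq> []" using xs(1) by (rule walk_nonempty)
  then have "\<exists>m ys. is_walk R ys \<and> hd ys = u \<and> last ys = v \<and> length ys = m + 1"
    using xs by (intro exI[of _ "length xs - 1"] exI[of _ xs]) simp
  then show ?thesis unfolding dist_def by (rule LeastI_ex)
qed

lemma walk_mono: "is_walk R xs \<Longrightarrow> (\<And>u v. R u v \<Longrightarrow> S u v) \<Longrightarrow> is_walk S xs"
  by (induction R xs rule: is_walk.induct) auto

lemma walk_append:
  "is_walk R xs \<Longrightarrow> is_walk R ys \<Longrightarrow> last xs = hd ys \<Longrightarrow>
   is_walk R (xs @ tl ys) \<and> hd (xs @ tl ys) = hd xs \<and> last (xs @ tl ys) = last ys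
   \<and> length (xs @ tl ys) = length xs + length ys - 1"
proof (induction xs)
  case Nil then show ?case by simp
next
  case (Cons x xs)
  have ne: "ys \<noteq> []" using Cons.prems(2) by (rule walk_nonempty)
  show ?case
  proof (cases xs)
    case Nil
    then have "x # tl ys = ys" using Cons.prems ne by (cases ys) auto
    then show ?thesis using Nil Cons.prems ne by (cases ys) auto
  next
    case (Cons y zs)
    have w: "is_walk R xs" using Cons.prems Cons by simp
    have l: "last xs = hd ys" using Cons.prems Cons by simp
    note IH = Cons.IH[OF w Cons.prems(2) l]
    have "R x y" using Cons.prems Cons by simp
    then have "is_walk R (x # (xs @ tl ys))" using IH Cons by simp
    then show ?thesis using IH Cons ne by simp
  qed
qed

lemma reach_trans:
  assumes "reach R u v" "reach R v w" shows "reach R u w"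
proof -
  obtain xs where xs: "is_walk R xs" "hd xs = u" "last xs = v" using assms(1) unfolding reach_def by blast
  obtain ys where ys: "is_walk R ys" "hd ys = v" "last ys = w" using assms(2) unfolding reach_def by blast
  have "last xs = hd ys" using xs ys by simp
  note a = walk_append[OF xs(1) ys(1) this]
  show ?thesis unfolding reach_def using a xs ys by blast
qed

lemma reach_mono:
  assumes "reach R u v" "\<And>u v. R u v \<Longrightarrow> S u v" shows "reach S u v"
proof -
  obtain xs where xs: "is_walk R xs" "hd xs = u" "last xs = v" using assms(1) unfolding reach_def by blast
  have "is_walk S xs" using walk_mono[OF xs(1)] assms(2) by blast
  then show ?thesis unfolding reach_def using xs by blast
qed

lemma walk_rev: "(\<And>u v. R u v \<Longrightarrow> R v u) \<Longrightarrow> is_walk R xs \<Longrightarrow> is_walk R (rev xs)"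
proof (induction R xs rule: is_walk.induct)
  case (3 adj x y xs)
  have a: "is_walk adj (rev (y # xs))" using 3 by simp
  have b: "is_walk adj [y, x]" using 3 by simp
  have "last (rev (y # xs)) = hd [y,x]" by simp
  from walk_append[OF a b this] show ?case by simp
qed auto

lemma dist_sym_le:
  assumes sym: "\<And>u v. R u v \<Longrightarrow> R v u" and r: "reach R u v"
  shows "dist R v u \<le> dist R u v"
proof -
  obtain xs where xs: "is_walk R xs" "hd xs = u" "last xs = v" "length xs = dist R u v + 1"
    using dist_ex[OF r] by blast
  have ne: "xs \<noteq> []" using xs(1) by (rule walk_nonempty)
  have "is_walk R (rev xs)" using walk_rev[OF sym xs(1)] by blast
  moreover have "hd (rev xs) = v" "last (rev xs) = u" using xs ne by (auto simp: hd_rev last_rev)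
  ultimately have "dist R v u \<le> length (rev xs) - 1" by (rule dist_le)
  then show ?thesis using xs by simp
qed

lemma reach_sym:
  assumes sym: "\<And>u v. R u v \<Longrightarrow> R v u" and r: "reach R u v"
  shows "reach R v u"
proof -
  obtain xs where xs: "is_walk R xs" "hd xs = u" "last xs = v" using r unfolding reach_def by blast
  have ne: "xs \<noteq> []" using xs(1) by (rule walk_nonempty)
  have "is_walk R (rev xs)" using walk_rev[of R, OF sym xs(1)] .
  moreover have "hd (rev xs) = v" "last (rev xs) = u" using xs ne by (auto simp: hd_rev last_rev)
  ultimately show ?thesis unfolding reach_def by blast
qed

lemma dist_sym:
  assumes sym: "\<And>u v. R u v \<Longrightarrow> R v u"
  shows "dist R u v = dist R v u"
proof (cases "reach R u v")
  case True
  then show ?thesis using dist_sym_le[of R, OF sym] reach_sym[of R, OF sym] by (meson le_antisym)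
next
  case False
  then have F: "\<not> reach R v u" using reach_sym[of R, OF sym] by blast
  have "dist R u v = (LEAST m. False)" unfolding dist_def using False unfolding reach_def by metis
  moreover have "dist R v u = (LEAST m. False)" unfolding dist_def using F unfolding reach_def by metis
  ultimately show ?thesis by simp
qed

lemma dist_self: "dist R u u = 0"
proof -
  have "dist R u u \<le> length [u] - 1" by (rule dist_le) auto
  then show ?thesis by simp
qed

lemma lazy_compress:
  "is_walk (\<lambda>u v. R u v \<or> u = v) xs \<Longrightarrow>
   \<exists>ys. is_walk R ys \<and> hd ys = hd xs \<and> last ys = last xs \<and> length ys \<le> length xs"
proof (induction "\<lambda>u v. R u v \<or> u = v" xs rule: is_walk.induct)
  case 1 then show ?case by simp
next
  case (2 x) then show ?case by (intro exI[of _ "[x]"]) auto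
next
  case (3 x y xs)
  then obtain ys where ys: "is_walk R ys" "hd ys = y" "last ys = last (y # xs)" "length ys \<le> length (y#xs)"
    by auto
  have ne: "ys \<noteq> []" using ys(1) by (rule walk_nonempty)
  show ?case
  proof (cases "x = y")
    case True then show ?thesis using ys by (intro exI[of _ ys]) auto
  next
    case False
    then have "R x y" using 3 by auto
    then have "is_walk R (x # ys)" using ys ne by (cases ys) auto
    then show ?thesis using ys ne by (intro exI[of _ "x # ys"]) auto
  qed
qed

definition proj :: "'a set \<Rightarrow> 'a \<Rightarrow> 'a \<Rightarrow> 'a" where
  "proj A c x = (if x \<in> A then x else c)"

lemma walk_proj:
  assumes cls: "\<And>x y. R x y \<Longrightarrow> (x \<in> A \<and> y \<in> A) \<or> (x \<in> B \<and> y \<in> B)"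
    and AB: "A \<inter> B = {c}"
  shows "is_walk R xs \<Longrightarrow>
    is_walk (\<lambda>u v. (R u v \<and> u \<in> A \<and> v \<in> A) \<or> u = v) (map (proj A c) xs)"
proof (induction xs)
  case Nil then show ?case by simp
next
  case (Cons x xs)
  show ?case
  proof (cases xs)
    case Nil then show ?thesis by simp
  next
    case (Cons y ys)
    have Rxy: "R x y" using Cons.prems Cons by simp
    have w: "is_walk R xs" using Cons.prems Cons by simp
    have IH: "is_walk (\<lambda>u v. (R u v \<and> u \<in> A \<and> v \<in> A) \<or> u = v) (proj A c y # map (proj A c) ys)"
      using Cons.IH[OF w] Cons by simp
    from cls[OF Rxy] have "(x \<in> A \<and> y \<in> A) \<or> (x \<in> B \<and> y \<in> B)" .
    then have e: "(R (proj A c x) (proj A c y) \<and> proj A c x \<in> A \<and> proj A c y \<in> A) \<or> proj A c x = proj A c y"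
    proof
      assume "x \<in> A \<and> y \<in> A"
      then show ?thesis using Rxy by (simp add: proj_def)
    next
      assume h: "x \<in> B \<and> y \<in> B"
      have px: "proj A c x = c"
      proof (cases "x \<in> A")
        case True then have "x \<in> A \<inter> B" using h by simp
        then show ?thesis using AB True by (simp add: proj_def)
      qed (simp add: proj_def)
      have py: "proj A c y = c"
      proof (cases "y \<in> A")
        case True then have "y \<in> A \<inter> B" using h by simp
        then show ?thesis using AB True by (simp add: proj_def)
      qed (simp add: proj_def)
      show ?thesis using px py by simp
    qed
    show ?thesis unfolding Cons using e IH by simp
  qed
qed

lemma block_dist:
  assumes cls: "\<And>x y. R x y \<Longrightarrow> (x \<in> A \<and> y \<in> A) \<or> (x \<in> B \<and> y \<in> B)"
    and AB: "A \<inter> B = {c}"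
    and uv: "u \<in> A" "v \<in> A"
    and r: "reach (\<lambda>x y. R x y \<and> x \<in> A \<and> y \<in> A) u v"
  shows "dist R u v = dist (\<lambda>x y. R x y \<and> x \<in> A \<and> y \<in> A) u v"
proof (rule le_antisym)
  let ?RA = "\<lambda>x y. R x y \<and> x \<in> A \<and> y \<in> A"
  obtain xs where xs: "is_walk ?RA xs" "hd xs = u" "last xs = v" "length xs = dist ?RA u v + 1"
    using dist_ex[OF r] by blast
  have "is_walk R xs" using walk_mono[OF xs(1)] by blast
  from dist_le[OF this xs(2,3)] xs(4) show "dist R u v \<le> dist ?RA u v" by simp
  have rR: "reach R u v" using reach_mono[OF r] by blast
  obtain ys where ys: "is_walk R ys" "hd ys = u" "last ys = v" "length ys = dist R u v + 1"
    using dist_ex[OF rR] by blast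
  have ne: "ys \<noteq> []" using ys(1) by (rule walk_nonempty)
  let ?p = "proj A c"
  have "is_walk (\<lambda>u v. ?RA u v \<or> u = v) (map ?p ys)" using walk_proj[OF cls AB ys(1)] by blast
  from lazy_compress[OF this] obtain zs where zs: "is_walk ?RA zs" "hd zs = hd (map ?p ys)"
    "last zs = last (map ?p ys)" "length zs \<le> length (map ?p ys)" by blast
  have "hd zs = u" "last zs = v" using zs ys ne uv by (auto simp: hd_map last_map proj_def)
  from dist_le[OF zs(1) this] zs(4) ys(4) show "dist ?RA u v \<le> dist R u v" by simp
qed

lemma walk_hits_cut:
  assumes cls: "\<And>x y. R x y \<Longrightarrow> (x \<in> A \<and> y \<in> A) \<or> (x \<in> B \<and> y \<in> B)"
    and AB: "A \<inter> B = {c}"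
  shows "is_walk R xs \<Longrightarrow> hd xs \<in> A \<Longrightarrow> last xs \<in> B \<Longrightarrow> c \<in> set xs"
proof (induction xs)
  case Nil then show ?case by simp
next
  case (Cons x xs)
  show ?case
  proof (cases xs)
    case Nil then show ?thesis using Cons.prems AB by auto
  next
    case (Cons y ys)
    show ?thesis
    proof (cases "x = c")
      case True then show ?thesis by simp
    next
      case False
      have xA: "x \<in> A" using Cons.prems by simp
      then have "x \<notin> B" using False AB by auto
      moreover have Rxy: "R x y" using Cons.prems Cons by simp
      ultimately have "y \<in> A" using cls by blast
      moreover have "is_walk R xs" using Cons.prems Cons by simp
      moreover have "last xs \<in> B" using Cons.prems Cons by simp
      ultimately have "c \<in> set xs" using Cons.IH Cons by simp
      then show ?thesis by simp
    qed
  qed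
qed

lemma walk_split:
  "is_walk R xs \<Longrightarrow> c \<in> set xs \<Longrightarrow> \<exists>ys zs. is_walk R ys \<and> is_walk R zs \<and> hd ys = hd xs \<and> last ys = c
     \<and> hd zs = c \<and> last zs = last xs \<and> length ys + length zs = length xs + 1"
proof (induction R xs rule: is_walk.induct)
  case (2 adj x) then show ?case by (intro exI[of _ "[x]"]) auto
next
  case (3 adj x y xs)
  show ?case
  proof (cases "x = c")
    case True then show ?thesis using 3 by (intro exI[of _ "[x]"] exI[of _ "x # y # xs"]) auto
  next
    case False
    then obtain ys zs where yz: "is_walk adj ys" "is_walk adj zs" "hd ys = y" "last ys = c"
      "hd zs = c" "last zs = last (y # xs)" "length ys + length zs = length (y # xs) + 1"
      using 3 by auto
    have ne: "ys \<noteq> []" using yz(1) by (rule walk_nonempty)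
    have "is_walk adj (x # ys)" using yz ne 3 by (cases ys) auto
    then show ?thesis using yz ne by (intro exI[of _ "x # ys"] exI[of _ zs]) auto
  qed
qed auto

lemma block_cross:
  assumes cls: "\<And>x y. R x y \<Longrightarrow> (x \<in> A \<and> y \<in> A) \<or> (x \<in> B \<and> y \<in> B)"
    and AB: "A \<inter> B = {c}"
    and uv: "u \<in> A" "v \<in> B"
    and r1: "reach R u c" and r2: "reach R c v"
  shows "dist R u v = dist R u c + dist R c v"
proof (rule le_antisym)
  obtain xs where xs: "is_walk R xs" "hd xs = u" "last xs = c" "length xs = dist R u c + 1"
    using dist_ex[OF r1] by blast
  obtain ys where ys: "is_walk R ys" "hd ys = c" "last ys = v" "length ys = dist R c v + 1"
    using dist_ex[OF r2] by blast
  have "last xs = hd ys" using xs ys by simp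
  note w = walk_append[OF xs(1) ys(1) this]
  from dist_le[of R "xs @ tl ys" u v] w xs ys
  show "dist R u v \<le> dist R u c + dist R c v" by simp
  have r: "reach R u v" using reach_trans[OF r1 r2] .
  obtain zs where zs: "is_walk R zs" "hd zs = u" "last zs = v" "length zs = dist R u v + 1"
    using dist_ex[OF r] by blast
  have "c \<in> set zs" using walk_hits_cut[OF cls AB zs(1)] zs uv by simp
  from walk_split[OF zs(1) this] obtain ys1 zs1 where s: "is_walk R ys1" "is_walk R zs1" "hd ys1 = u" "last ys1 = c"
     "hd zs1 = c" "last zs1 = v" "length ys1 + length zs1 = length zs + 1" using zs by auto
  have "dist R u c \<le> length ys1 - 1" using dist_le[OF s(1,3,4)] .
  moreover have "dist R c v \<le> length zs1 - 1" using dist_le[OF s(2,5,6)] .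
  moreover have "ys1 \<noteq> []" using s(1) by (rule walk_nonempty)
  moreover have "zs1 \<noteq> []" using s(2) by (rule walk_nonempty)
  ultimately show "dist R u c + dist R c v \<le> dist R u v" using s(7) zs(4)
    by (cases ys1; cases zs1) auto
qed




definition hs :: "(nat \<Rightarrow> nat \<Rightarrow> 'a) \<Rightarrow> nat \<Rightarrow> 'a set" where
  "hs H k = H k ` {..<6}"
definition hx :: "(nat \<Rightarrow> nat \<Rightarrow> 'a) \<Rightarrow> nat \<Rightarrow> 'a \<Rightarrow> 'a \<Rightarrow> bool" where
  "hx H k = (\<lambda>u v. \<exists>i<6. {u, v} = {H k i, H k ((i + 1) mod 6)})"
definition cyc :: "nat \<Rightarrow> nat \<Rightarrow> nat" where
  "cyc i j = min ((j + 6 - i) mod 6) ((i + 6 - j) mod 6)"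

fun fw :: "(nat \<Rightarrow> 'a) \<Rightarrow> nat \<Rightarrow> nat \<Rightarrow> 'a list" where
  "fw h i 0 = [h i]"
| "fw h i (Suc s) = h i # fw h ((i + 1) mod 6) s"

lemma walk_cons: "ys \<noteq> [] \<Longrightarrow> is_walk R (x # ys) = (R x (hd ys) \<and> is_walk R ys)"
  by (cases ys) auto

lemma hx_sym: "hx H k u v \<Longrightarrow> hx H k v u"
  unfolding hx_def by (auto simp: insert_commute)

lemma fw_ne: "fw h i s \<noteq> []"
  by (cases s) auto

lemma fw_hd: "hd (fw h i s) = h i"
  by (cases s) auto

lemma fw_props:
  "i < 6 \<Longrightarrow> is_walk (hx H k) (fw (H k) i s) \<and> last (fw (H k) i s) = H k ((i + s) mod 6)
     \<and> length (fw (H k) i s) = s + 1"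
proof (induction s arbitrary: i)
  case 0 then show ?case by simp
next
  case (Suc s)
  have i': "(i + 1) mod 6 < 6" by simp
  note IH = Suc.IH[OF i']
  have e: "hx H k (H k i) (H k ((i + 1) mod 6))" unfolding hx_def using Suc.prems by blast
  have "is_walk (hx H k) (fw (H k) i (Suc s))"
    using walk_cons[OF fw_ne, of "hx H k" "H k i"] e IH by (simp add: fw_hd)
  moreover have "last (fw (H k) i (Suc s)) = H k ((i + Suc s) mod 6)"
    using IH fw_ne[of "H k" "(i + 1) mod 6" s] by (simp add: mod_add_left_eq)
  ultimately show ?case using IH by simp
qed

lemma fw_end: "(i::nat) < 6 \<Longrightarrow> j < 6 \<Longrightarrow> (i + (j + 6 - i) mod 6) mod 6 = j"
  by (simp add: mod_add_right_eq)

lemma hex_reach: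
  assumes "i < 6" "j < 6" shows "reach (hx H k) (H k i) (H k j)"
proof -
  note f = fw_props[OF assms(1), of H k "(j + 6 - i) mod 6"]
  then show ?thesis unfolding reach_def using fw_hd fw_end[OF assms] by metis
qed

lemma hex_upper:
  assumes "i < 6" "j < 6" shows "dist (hx H k) (H k i) (H k j) \<le> cyc i j"
proof -
  have a: "dist (hx H k) (H k i) (H k j) \<le> (j + 6 - i) mod 6"
  proof -
    note f = fw_props[OF assms(1), of H k "(j + 6 - i) mod 6"]
    have "dist (hx H k) (H k i) (H k j) \<le> length (fw (H k) i ((j + 6 - i) mod 6)) - 1"
      using f fw_hd fw_end[OF assms] by (intro dist_le) auto
    then show ?thesis using f by simp
  qed
  have b: "dist (hx H k) (H k j) (H k i) \<le> (i + 6 - j) mod 6"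
  proof -
    note f = fw_props[OF assms(2), of H k "(i + 6 - j) mod 6"]
    have "dist (hx H k) (H k j) (H k i) \<le> length (fw (H k) j ((i + 6 - j) mod 6)) - 1"
      using f fw_hd fw_end[OF assms(2,1)] by (intro dist_le) auto
    then show ?thesis using f by simp
  qed
  have "dist (hx H k) (H k i) (H k j) = dist (hx H k) (H k j) (H k i)"
    by (rule dist_sym) (rule hx_sym)
  then show ?thesis using a b unfolding cyc_def by simp
qed

lemma six_cases: "(a::nat) < 6 \<Longrightarrow> a = 0 \<or> a = 1 \<or> a = 2 \<or> a = 3 \<or> a = 4 \<or> a = 5"
  by arith

lemma cyc_step1: "a < 6 \<Longrightarrow> j < 6 \<Longrightarrow> cyc a j \<le> cyc ((a + 1) mod 6) j + 1"
  using six_cases[of a] six_cases[of j] by (auto simp: cyc_def)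

lemma cyc_step2: "a < 6 \<Longrightarrow> j < 6 \<Longrightarrow> cyc ((a + 1) mod 6) j \<le> cyc a j + 1"
  using six_cases[of a] six_cases[of j] by (auto simp: cyc_def)

lemma cyc_self: "cyc i i = 0"
  by (simp add: cyc_def)

lemma hex_lower:
  assumes inj: "inj_on (H k) {..<6}"
  shows "is_walk (hx H k) xs \<Longrightarrow> i < 6 \<Longrightarrow> hd xs = H k i \<Longrightarrow> j < 6 \<Longrightarrow> last xs = H k j
     \<Longrightarrow> cyc i j \<le> length xs - 1"
proof (induction xs arbitrary: i)
  case Nil then show ?case by simp
next
  case (Cons x xs)
  show ?case
  proof (cases xs)
    case Nil
    then have "H k i = H k j" using Cons.prems by simp
    then have "i = j" using inj Cons.prems(2,4) by (simp add: inj_on_eq_iff)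
    then show ?thesis by (simp add: cyc_self)
  next
    case (Cons y ys)
    have xi: "x = H k i" using Cons.prems by simp
    have e: "hx H k x y" using Cons.prems Cons by simp
    have w: "is_walk (hx H k) xs" using Cons.prems Cons by simp
    have lj: "last xs = H k j" using Cons.prems Cons by simp
    obtain a where a: "a < 6" "{x, y} = {H k a, H k ((a + 1) mod 6)}" using e unfolding hx_def by blast
    have a1: "(a + 1) mod 6 < 6" by simp
    from a(2) have "(x = H k a \<and> y = H k ((a + 1) mod 6)) \<or> (x = H k ((a + 1) mod 6) \<and> y = H k a)"
      by (simp add: doubleton_eq_iff)
    then show ?thesis
    proof
      assume h: "x = H k a \<and> y = H k ((a + 1) mod 6)"
      then have "i = a" using xi inj a(1) Cons.prems(2) by (simp add: inj_on_eq_iff)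
      have "cyc ((a + 1) mod 6) j \<le> length xs - 1"
        using Cons.IH[OF w a1 _ Cons.prems(4) lj] h Cons by simp
      then show ?thesis using cyc_step1[OF a(1) Cons.prems(4)] \<open>i = a\<close> Cons by simp
    next
      assume h: "x = H k ((a + 1) mod 6) \<and> y = H k a"
      then have "i = (a + 1) mod 6" using xi inj a1 Cons.prems(2) by (simp add: inj_on_eq_iff)
      have "cyc a j \<le> length xs - 1"
        using Cons.IH[OF w a(1) _ Cons.prems(4) lj] h Cons by simp
      then show ?thesis using cyc_step2[OF a(1) Cons.prems(4)] \<open>i = (a + 1) mod 6\<close> Cons by simp
    qed
  qed
qed

lemma hex_dist:
  assumes inj: "inj_on (H k) {..<6}" and ij: "i < 6" "j < 6"
  shows "dist (hx H k) (H k i) (H k j) = cyc i j"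
proof (rule le_antisym)
  show "dist (hx H k) (H k i) (H k j) \<le> cyc i j" using hex_upper[OF ij] .
  obtain xs where xs: "is_walk (hx H k) xs" "hd xs = H k i" "last xs = H k j"
     "length xs = dist (hx H k) (H k i) (H k j) + 1" using dist_ex[OF hex_reach[OF ij]] by blast
  from hex_lower[OF inj xs(1) ij(1) xs(2) ij(2) xs(3)] xs(4)
  show "cyc i j \<le> dist (hx H k) (H k i) (H k j)" by simp
qed

lemma sum6: "(\<Sum>j<(6::nat). f j) = f 0 + f 1 + f 2 + f 3 + f 4 + (f 5 :: real)"
  by (simp add: eval_nat_numeral)

lemma cyc_sum: "i < 6 \<Longrightarrow> (\<Sum>j<6. real (cyc i j)) = 9"
  using six_cases[of i] by (auto simp: sum6 cyc_def)

lemma hex_sum: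
  assumes inj: "inj_on (H k) {..<6}" and x: "x \<in> hs H k"
  shows "(\<Sum>y\<in>hs H k. real (dist (hx H k) x y)) = 9"
proof -
  obtain i where i: "i < 6" "x = H k i" using x unfolding hs_def by blast
  have "(\<Sum>y\<in>hs H k. real (dist (hx H k) x y)) = (\<Sum>j<6. real (dist (hx H k) x (H k j)))"
    unfolding hs_def by (rule sum.reindex[OF inj, unfolded comp_def])
  also have "\<dots> = (\<Sum>j<6. real (cyc i j))"
    using i hex_dist[of H k, OF inj] by (intro sum.cong) auto
  finally show ?thesis using cyc_sum[OF i(1)] by simp
qed

lemma hex_sum':
  assumes inj: "inj_on (H k) {..<6}" and x: "x \<in> hs H k"
  shows "(\<Sum>y\<in>hs H k. real (dist (hx H k) y x)) = 9"
proof -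
  have "\<And>y. dist (hx H k) y x = dist (hx H k) x y" by (rule dist_sym) (rule hx_sym)
  then show ?thesis using hex_sum[OF assms] by simp
qed

lemma hex_reach':
  assumes "x \<in> hs H k" "y \<in> hs H k" shows "reach (hx H k) x y"
  using assms hex_reach unfolding hs_def by blast

lemma cyc_pos: "i < 6 \<Longrightarrow> j < 6 \<Longrightarrow> i \<noteq> j \<Longrightarrow> cyc i j = 1 \<or> cyc i j = 2 \<or> cyc i j = 3"
  using six_cases[of i] six_cases[of j] by (auto simp: cyc_def)




lemma pair_val:
  assumes sym: "\<And>u v. dist adj u v = dist adj v u" and ab: "a \<noteq> b"
  shows "dist adj (SOME u. u \<in> {a, b}) (SOME v. v \<in> {a, b} - {SOME u. u \<in> {a, b}}) = dist adj a b"
proof -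
  define s where "s = (SOME u. u \<in> {a, b})"
  have s: "s \<in> {a, b}" unfolding s_def by (rule someI[of _ a]) simp
  define t where "t = (SOME v. v \<in> {a, b} - {s})"
  have ne: "\<exists>v. v \<in> {a, b} - {s}" using s ab by auto
  have t: "t \<in> {a, b} - {s}" unfolding t_def using ne by (rule someI_ex)
  have "(s = a \<and> t = b) \<or> (s = b \<and> t = a)" using s t by auto
  then have "dist adj s t = dist adj a b" using sym by auto
  then show ?thesis unfolding s_def t_def .
qed

lemma wiener_sum:
  fixes V :: "'a set"
  assumes fin: "finite V" and sym: "\<And>u v. dist adj u v = dist adj v u"
  shows "wiener V adj = (\<Sum>u\<in>V. \<Sum>v\<in>V. real (dist adj u v)) / 2"
proof -
  define S where "S = {p \<in> V \<times> V. fst p \<noteq> snd p}"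
  define PS where "PS = {P. \<exists>u\<in>V. \<exists>v\<in>V. u \<noteq> v \<and> P = {u, v}}"
  define f where "f = (\<lambda>p::'a \<times> 'a. real (dist adj (fst p) (snd p)))"
  define g where "g = (\<lambda>p::'a \<times> 'a. {fst p, snd p})"
  define val where "val = (\<lambda>P::'a set. real (dist adj (SOME u. u \<in> P) (SOME v. v \<in> P - {SOME u. u \<in> P})))"
  have finVV: "finite (V \<times> V)" using fin by simp
  have finS: "finite S" unfolding S_def using finVV by simp
  have PSsub: "PS \<subseteq> Pow V" unfolding PS_def by auto
  have finPS: "finite PS" using finite_subset[OF PSsub] fin by simp
  have "(\<Sum>u\<in>V. \<Sum>v\<in>V. real (dist adj u v)) = (\<Sum>p\<in>V \<times> V. f p)"
    unfolding f_def by (simp add: sum.cartesian_product case_prod_beta)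
  also have "\<dots> = (\<Sum>p\<in>S. f p)"
  proof (rule sum.mono_neutral_right[OF finVV])
    show "S \<subseteq> V \<times> V" unfolding S_def by auto
    show "\<forall>i\<in>V \<times> V - S. f i = 0" unfolding S_def f_def by (auto simp: dist_self)
  qed
  also have "\<dots> = (\<Sum>P\<in>PS. \<Sum>p\<in>{x. x \<in> S \<and> g x = P}. f p)"
  proof (rule sum.group[symmetric, OF finS finPS])
    show "g ` S \<subseteq> PS" unfolding S_def PS_def g_def by force
  qed
  also have "\<dots> = (\<Sum>P\<in>PS. 2 * val P)"
  proof (rule sum.cong[OF refl])
    fix P assume "P \<in> PS"
    then obtain a b where ab: "a \<in> V" "b \<in> V" "a \<noteq> b" "P = {a, b}" unfolding PS_def by blast
    have fib: "{x. x \<in> S \<and> g x = P} = {(a, b), (b, a)}"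
      using ab unfolding S_def g_def by (auto simp: doubleton_eq_iff)
    have "(\<Sum>p\<in>{x. x \<in> S \<and> g x = P}. f p) = f (a, b) + f (b, a)"
      unfolding fib using ab(3) by simp
    also have "\<dots> = 2 * real (dist adj a b)" unfolding f_def using sym[of b a] by simp
    also have "\<dots> = 2 * val P" unfolding val_def ab(4) using pair_val[OF sym ab(3)] by simp
    finally show "(\<Sum>p\<in>{x. x \<in> S \<and> g x = P}. f p) = 2 * val P" .
  qed
  also have "\<dots> = 2 * wiener V adj" unfolding wiener_def val_def PS_def by (simp add: sum_distrib_left)
  finally show ?thesis by simp
qed




definition vm :: "(nat \<Rightarrow> nat \<Rightarrow> 'a) \<Rightarrow> nat \<Rightarrow> 'a set" where
  "vm H m = (\<Union>k<m. hs H k)"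
definition am :: "(nat \<Rightarrow> nat \<Rightarrow> 'a) \<Rightarrow> nat \<Rightarrow> 'a \<Rightarrow> 'a \<Rightarrow> bool" where
  "am H m = (\<lambda>u v. \<exists>k<m. \<exists>i<6. {u, v} = {H k i, H k ((i + 1) mod 6)})"

lemma vm_Suc: "vm H (Suc m) = vm H m \<union> hs H m"
  unfolding vm_def by (auto simp: lessThan_Suc)

lemma vm_1: "vm H 1 = hs H 0"
  unfolding vm_def by (simp add: lessThan_Suc)

lemma am_1: "am H 1 = hx H 0"
  unfolding am_def hx_def by simp

lemma hs_mem: "i < 6 \<Longrightarrow> H k i \<in> hs H k"
  unfolding hs_def by simp

lemma am_cls: "am H (Suc m) x y \<Longrightarrow> (x \<in> vm H m \<and> y \<in> vm H m) \<or> (x \<in> hs H m \<and> y \<in> hs H m)"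
proof -
  assume "am H (Suc m) x y"
  then obtain k i where ki: "k < Suc m" "i < 6" "{x, y} = {H k i, H k ((i + 1) mod 6)}"
    unfolding am_def by blast
  have xy: "x \<in> hs H k" "y \<in> hs H k" using ki(3) hs_mem[OF ki(2)] hs_mem[of "(i + 1) mod 6"]
    by (auto simp: doubleton_eq_iff)
  show ?thesis
  proof (cases "k = m")
    case True then show ?thesis using xy by simp
  next
    case False then have "k < m" using ki by simp
    then show ?thesis using xy unfolding vm_def by blast
  qed
qed

lemma am_sym: "am H m u v \<Longrightarrow> am H m v u"
  unfolding am_def by (auto simp: insert_commute)

lemma am_mono: "m \<le> M \<Longrightarrow> am H m u v \<Longrightarrow> am H M u v"
  unfolding am_def by (meson less_le_trans)

lemma hx_am: "k < m \<Longrightarrow> hx H k u v \<Longrightarrow> am H m u v"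
  unfolding am_def hx_def by blast

lemma vm_mono: "m \<le> M \<Longrightarrow> vm H m \<subseteq> vm H M"
  unfolding vm_def by (rule UN_mono) auto

lemma finite_vm: "finite (vm H m)"
  unfolding vm_def hs_def by simp

lemma finite_hs: "finite (hs H m)"
  unfolding hs_def by simp

locale chain =
  fixes N :: nat and H :: "nat \<Rightarrow> nat \<Rightarrow> 'a" and c :: "nat \<Rightarrow> 'a"
  assumes inj: "\<And>k. k < N \<Longrightarrow> inj_on (H k) {..<6}"
  and cut: "\<And>k. 1 \<le> k \<Longrightarrow> k < N \<Longrightarrow> hs H (k - 1) \<inter> hs H k = {c k}"
  and disj: "\<And>j k. j < N \<Longrightarrow> k < N \<Longrightarrow> j + 2 \<le> k \<Longrightarrow> hs H j \<inter> hs H k = {}"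
begin

lemma vm_cap: assumes "1 \<le> m" "m < N" shows "vm H m \<inter> hs H m = {c m}"
proof
  show "vm H m \<inter> hs H m \<subseteq> {c m}"
  proof
    fix x assume x: "x \<in> vm H m \<inter> hs H m"
    then obtain k where k: "k < m" "x \<in> hs H k" unfolding vm_def by blast
    show "x \<in> {c m}"
    proof (cases "k = m - 1")
      case True then show ?thesis using cut[OF assms] x k by auto
    next
      case False then have "k + 2 \<le> m" using k by simp
      then have "hs H k \<inter> hs H m = {}" using disj[of k m] k assms by simp
      then show ?thesis using x k by auto
    qed
  qed
  have "c m \<in> hs H (m - 1)" "c m \<in> hs H m" using cut[OF assms] by auto
  moreover have "m - 1 < m" using assms by simp
  ultimately show "{c m} \<subseteq> vm H m \<inter> hs H m" unfolding vm_def by blast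
qed

lemma cm_in: assumes "1 \<le> m" "m < N" shows "c m \<in> vm H m" "c m \<in> hs H m" "c m \<in> hs H (m - 1)"
  using vm_cap[OF assms] cut[OF assms] by auto

lemma hx_neq: assumes "k < N" "hx H k x y" shows "x \<noteq> y"
proof -
  obtain i where i: "i < 6" "{x, y} = {H k i, H k ((i + 1) mod 6)}" using assms(2) unfolding hx_def by blast
  have "i \<noteq> (i + 1) mod 6" using i(1) by (simp add: mod_if)
  then have "H k i \<noteq> H k ((i + 1) mod 6)" using inj[OF assms(1)] i(1)
    by (simp add: inj_on_eq_iff)
  then show ?thesis using i(2) by (auto simp: doubleton_eq_iff)
qed

lemma restrA: assumes "1 \<le> m" "m < N"
  shows "(\<lambda>x y. am H (Suc m) x y \<and> x \<in> vm H m \<and> y \<in> vm H m) = am H m"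
proof (intro ext iffI)
  fix x y assume h: "am H (Suc m) x y \<and> x \<in> vm H m \<and> y \<in> vm H m"
  then obtain k i where ki: "k < Suc m" "i < 6" "{x, y} = {H k i, H k ((i + 1) mod 6)}"
    unfolding am_def by blast
  show "am H m x y"
  proof (cases "k = m")
    case True
    then have "hx H m x y" using ki unfolding hx_def by blast
    moreover have "x \<in> hs H m" "y \<in> hs H m" using am_cls[of H m x y] True ki(2,3) hs_mem[OF ki(2)]
        hs_mem[of "(i + 1) mod 6"] by (auto simp: doubleton_eq_iff)
    then have "x = c m" "y = c m" using h vm_cap[OF assms] by auto
    ultimately have False using hx_neq[OF assms(2), of x y] by simp
    then show ?thesis ..
  next
    case False then have "k < m" using ki by simp
    then show ?thesis using ki unfolding am_def by blast
  qed
next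
  fix x y assume h: "am H m x y"
  then have "am H (Suc m) x y" using am_mono[of m "Suc m" H] by simp
  moreover have "x \<in> vm H m \<and> y \<in> vm H m"
  proof -
    have "am H (Suc (m - 1)) x y" using h assms by simp
    from am_cls[OF this] have "(x \<in> vm H (m - 1) \<and> y \<in> vm H (m - 1)) \<or> (x \<in> hs H (m - 1) \<and> y \<in> hs H (m - 1))" .
    moreover have "vm H m = vm H (m - 1) \<union> hs H (m - 1)" using vm_Suc[of H "m - 1"] assms by simp
    ultimately show ?thesis by blast
  qed
  ultimately show "am H (Suc m) x y \<and> x \<in> vm H m \<and> y \<in> vm H m" by blast
qed

lemma restrB: assumes "1 \<le> m" "m < N"
  shows "(\<lambda>x y. am H (Suc m) x y \<and> x \<in> hs H m \<and> y \<in> hs H m) = hx H m"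
proof (intro ext iffI)
  fix x y assume h: "am H (Suc m) x y \<and> x \<in> hs H m \<and> y \<in> hs H m"
  then obtain k i where ki: "k < Suc m" "i < 6" "{x, y} = {H k i, H k ((i + 1) mod 6)}"
    unfolding am_def by blast
  show "hx H m x y"
  proof (cases "k = m")
    case True then show ?thesis using ki unfolding hx_def by blast
  next
    case False then have km: "k < m" using ki by simp
    then have "hx H k x y" using ki unfolding hx_def by blast
    moreover have "x \<in> hs H k" "y \<in> hs H k" using ki(2,3) hs_mem[OF ki(2)]
        hs_mem[of "(i + 1) mod 6"] by (auto simp: doubleton_eq_iff)
    then have "x \<in> vm H m" "y \<in> vm H m" using km unfolding vm_def by blast+
    then have "x = c m" "y = c m" using h vm_cap[OF assms] by auto
    ultimately show ?thesis using hx_neq[of k x y] km assms by simp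
  qed
next
  fix x y assume h: "hx H m x y"
  then have "am H (Suc m) x y" using hx_am[of m "Suc m"] by simp
  moreover have "x \<in> hs H m" "y \<in> hs H m"
  proof -
    obtain i where i: "i < 6" "{x, y} = {H m i, H m ((i + 1) mod 6)}" using h unfolding hx_def by blast
    then show "x \<in> hs H m" "y \<in> hs H m" using hs_mem[OF i(1)] hs_mem[of "(i + 1) mod 6"]
      by (auto simp: doubleton_eq_iff)
  qed
  ultimately show "am H (Suc m) x y \<and> x \<in> hs H m \<and> y \<in> hs H m" by blast
qed

lemma conn: "1 \<le> m \<Longrightarrow> m \<le> N \<Longrightarrow> u \<in> vm H m \<Longrightarrow> v \<in> vm H m \<Longrightarrow> reach (am H m) u v"
proof (induction m arbitrary: u v rule: nat_induct_at_least)
  case base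
  then show ?case unfolding am_1 vm_1 using hex_reach' by metis
next
  case (Suc m)
  have mN: "m < N" using Suc by simp
  have mono1: "\<And>x y. am H m x y \<Longrightarrow> am H (Suc m) x y" using am_mono[of m "Suc m" H] by simp
  have mono2: "\<And>x y. hx H m x y \<Longrightarrow> am H (Suc m) x y" using hx_am[of m "Suc m" H] by simp
  have IH: "\<And>x y. x \<in> vm H m \<Longrightarrow> y \<in> vm H m \<Longrightarrow> reach (am H (Suc m)) x y"
    using Suc.IH mN reach_mono mono1 by (metis less_imp_le)
  have HX: "\<And>x y. x \<in> hs H m \<Longrightarrow> y \<in> hs H m \<Longrightarrow> reach (am H (Suc m)) x y"
    using hex_reach' reach_mono mono2 by metis
  note cm = cm_in[OF Suc.hyps mN]
  have u: "u \<in> vm H m \<or> u \<in> hs H m" and v: "v \<in> vm H m \<or> v \<in> hs H m"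
    using Suc.prems vm_Suc[of H m] by auto
  show ?case
    using u v IH HX cm reach_trans by metis
qed

lemma dA: assumes "1 \<le> m" "m < N" "u \<in> vm H m" "v \<in> vm H m"
  shows "dist (am H (Suc m)) u v = dist (am H m) u v"
proof -
  have r: "reach (\<lambda>x y. am H (Suc m) x y \<and> x \<in> vm H m \<and> y \<in> vm H m) u v"
    unfolding restrA[OF assms(1,2)] using conn assms by simp
  have "dist (am H (Suc m)) u v = dist (\<lambda>x y. am H (Suc m) x y \<and> x \<in> vm H m \<and> y \<in> vm H m) u v"
    by (rule block_dist[OF am_cls vm_cap[OF assms(1,2)] assms(3,4) r])
  then show ?thesis unfolding restrA[OF assms(1,2)] .
qed

lemma cls_swap: "am H (Suc m) x y \<Longrightarrow> (x \<in> hs H m \<and> y \<in> hs H m) \<or> (x \<in> vm H m \<and> y \<in> vm H m)"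
  using am_cls[of H m x y] by blast

lemma dB: assumes "1 \<le> m" "m < N" "u \<in> hs H m" "v \<in> hs H m"
  shows "dist (am H (Suc m)) u v = dist (hx H m) u v"
proof -
  have r: "reach (\<lambda>x y. am H (Suc m) x y \<and> x \<in> hs H m \<and> y \<in> hs H m) u v"
    unfolding restrB[OF assms(1,2)] using hex_reach' assms by metis
  have cap: "hs H m \<inter> vm H m = {c m}" using vm_cap[OF assms(1,2)] by blast
  have "dist (am H (Suc m)) u v = dist (\<lambda>x y. am H (Suc m) x y \<and> x \<in> hs H m \<and> y \<in> hs H m) u v"
    by (rule block_dist[OF cls_swap cap assms(3,4) r])
  then show ?thesis unfolding restrB[OF assms(1,2)] .
qed

lemma dAB: assumes "1 \<le> m" "m < N" "u \<in> vm H m" "v \<in> hs H m"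
  shows "dist (am H (Suc m)) u v = dist (am H m) u (c m) + dist (hx H m) (c m) v"
proof -
  note cm = cm_in[OF assms(1,2)]
  have vS: "u \<in> vm H (Suc m)" "v \<in> vm H (Suc m)" "c m \<in> vm H (Suc m)" using assms cm vm_Suc[of H m] by auto
  have r1: "reach (am H (Suc m)) u (c m)" using conn[of "Suc m"] assms vS by simp
  have r2: "reach (am H (Suc m)) (c m) v" using conn[of "Suc m"] assms vS by simp
  have "dist (am H (Suc m)) u v = dist (am H (Suc m)) u (c m) + dist (am H (Suc m)) (c m) v"
    by (rule block_cross[OF am_cls vm_cap[OF assms(1,2)] assms(3,4) r1 r2])
  then show ?thesis using dA[OF assms(1,2,3) cm(1)] dB[OF assms(1,2) cm(2) assms(4)] by simp
qed

lemma dist_inv: "m \<le> M \<Longrightarrow> 1 \<le> m \<Longrightarrow> M \<le> N \<Longrightarrow> u \<in> vm H m \<Longrightarrow> v \<in> vm H m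
   \<Longrightarrow> dist (am H M) u v = dist (am H m) u v"
proof (induction M rule: nat_induct_at_least)
  case base then show ?case by simp
next
  case (Suc M)
  have "u \<in> vm H M" "v \<in> vm H M" using vm_mono[of m M H] Suc.hyps(1) Suc.prems by auto
  then have "dist (am H (Suc M)) u v = dist (am H M) u v"
    using dA[of M u v] Suc by simp
  then show ?case using Suc by simp
qed

lemma card_hs: "k < N \<Longrightarrow> card (hs H k) = 6"
  unfolding hs_def using inj by (simp add: card_image)

lemma card_vm: "1 \<le> m \<Longrightarrow> m \<le> N \<Longrightarrow> card (vm H m) = 5 * m + 1"
proof (induction m rule: nat_induct_at_least)
  case base then show ?case using card_hs[of 0] vm_1[of H] by simp
next
  case (Suc m)
  have mN: "m < N" using Suc by simp
  have "card (vm H m) + card (hs H m) = card (vm H m \<union> hs H m) + card (vm H m \<inter> hs H m)"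
    by (rule card_Un_Int[OF finite_vm finite_hs])
  then show ?case using vm_Suc[of H m] vm_cap[OF Suc.hyps mN] card_hs[OF mN] Suc by simp
qed

end




context chain begin

definition TT :: "nat \<Rightarrow> real" where
  "TT m = (\<Sum>u\<in>vm H m. \<Sum>v\<in>vm H m. real (dist (am H m) u v))"
definition DD :: "nat \<Rightarrow> real" where
  "DD m = (\<Sum>x\<in>vm H m. real (dist (am H m) x (c m)))"

lemma step_setup:
  assumes m: "1 \<le> m" "m < N"
  shows "vm H (Suc m) = vm H m \<union> (hs H m - {c m})" "vm H m \<inter> (hs H m - {c m}) = {}"
    "card (hs H m - {c m}) = 5" "card (vm H m) = 5 * m + 1"
proof -
  note cm = cm_in[OF m]
  show "vm H (Suc m) = vm H m \<union> (hs H m - {c m})" using vm_Suc[of H m] cm by auto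
  show "vm H m \<inter> (hs H m - {c m}) = {}" using vm_cap[OF m] by auto
  show "card (hs H m - {c m}) = 5" using card_hs[OF m(2)] cm by (simp add: finite_hs)
  show "card (vm H m) = 5 * m + 1" using card_vm m by simp
qed

lemma sumU:
  assumes m: "1 \<le> m" "m < N"
  shows "(\<Sum>x\<in>vm H (Suc m). f x) = (\<Sum>x\<in>vm H m. f x) + (\<Sum>x\<in>hs H m - {c m}. (f x :: real))"
proof -
  note s = step_setup[OF m]
  show ?thesis unfolding s(1) by (rule sum.union_disjoint) (auto simp: finite_vm finite_hs s(2))
qed

lemma sumB':
  assumes m: "1 \<le> m" "m < N"
  shows "(\<Sum>x\<in>hs H m - {c m}. f x) = (\<Sum>x\<in>hs H m. f x) - (f (c m) :: real)"
  using sum_diff1[OF finite_hs, of f H m "c m"] cm_in[OF m] by simp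

lemma hsym: "dist (hx H m) x y = dist (hx H m) y x"
  by (rule dist_sym) (rule hx_sym)

lemma asym: "dist (am H m) x y = dist (am H m) y x"
  by (rule dist_sym) (rule am_sym)

lemma step_T:
  assumes m: "1 \<le> m" "m < N"
  shows "TT (Suc m) = TT m + 10 * DD m + 90 * real m + 54"
proof -
  define A where "A = vm H m"
  define B where "B = hs H m"
  define B' where "B' = hs H m - {c m}"
  define cc where "cc = c m"
  define d' where "d' = (\<lambda>u v. real (dist (am H (Suc m)) u v))"
  define d where "d = (\<lambda>u v. real (dist (am H m) u v))"
  define h where "h = (\<lambda>u v. real (dist (hx H m) u v))"
  note s = step_setup[OF m]
  note cm = cm_in[OF m]
  have ccA: "cc \<in> A" and ccB: "cc \<in> B" using cm unfolding A_def B_def cc_def by auto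
  have B'B: "B' \<subseteq> B" unfolding B'_def B_def by auto
  have cardB': "card B' = 5" using s unfolding B'_def by simp
  have cardA: "card A = 5 * m + 1" using s unfolding A_def by simp
  have hs1: "\<And>x. x \<in> B \<Longrightarrow> (\<Sum>y\<in>B. h x y) = 9" unfolding h_def B_def
    using hex_sum[of H m, OF inj[OF m(2)]] by blast
  have hs2: "\<And>x. x \<in> B \<Longrightarrow> (\<Sum>y\<in>B. h y x) = 9" unfolding h_def B_def
    using hex_sum'[of H m, OF inj[OF m(2)]] by blast
  have hcc: "h cc cc = 0" unfolding h_def by (simp add: dist_self)
  have sB': "\<And>f. (\<Sum>x\<in>B'. f x) = (\<Sum>x\<in>B. f x) - (f cc :: real)"
    unfolding B'_def B_def cc_def using sumB'[OF m] by blast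
  have eA: "\<And>u v. u \<in> A \<Longrightarrow> v \<in> A \<Longrightarrow> d' u v = d u v"
    unfolding d'_def d_def A_def using dA[OF m] by simp
  have eAB: "\<And>u v. u \<in> A \<Longrightarrow> v \<in> B \<Longrightarrow> d' u v = d u cc + h cc v"
    unfolding d'_def d_def h_def A_def B_def cc_def using dAB[OF m] by simp
  have eBA: "\<And>u v. u \<in> B \<Longrightarrow> v \<in> A \<Longrightarrow> d' u v = d v cc + h cc u"
  proof -
    fix u v assume "u \<in> B" "v \<in> A"
    have "d' u v = d' v u" unfolding d'_def using asym by simp
    then show "d' u v = d v cc + h cc u" using eAB[OF \<open>v \<in> A\<close> \<open>u \<in> B\<close>] by simp
  qed
  have eB: "\<And>u v. u \<in> B \<Longrightarrow> v \<in> B \<Longrightarrow> d' u v = h u v"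
    unfolding d'_def h_def B_def using dB[OF m] by simp
  have TTs: "TT (Suc m) = (\<Sum>u\<in>A. \<Sum>v\<in>A. d' u v) + (\<Sum>u\<in>A. \<Sum>v\<in>B'. d' u v)
       + ((\<Sum>u\<in>B'. \<Sum>v\<in>A. d' u v) + (\<Sum>u\<in>B'. \<Sum>v\<in>B'. d' u v))"
    unfolding TT_def sumU[OF m] A_def B'_def d'_def by (simp add: sum.distrib)
  have P1: "(\<Sum>u\<in>A. \<Sum>v\<in>A. d' u v) = TT m"
  proof -
    have "(\<Sum>u\<in>A. \<Sum>v\<in>A. d' u v) = (\<Sum>u\<in>A. \<Sum>v\<in>A. d u v)"
      using eA by (intro sum.cong refl) auto
    then show ?thesis unfolding TT_def A_def d_def by simp
  qed
  have P2: "(\<Sum>u\<in>A. \<Sum>v\<in>B'. d' u v) = 5 * DD m + 9 * (5 * real m + 1)"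
  proof -
    have "(\<Sum>u\<in>A. \<Sum>v\<in>B'. d' u v) = (\<Sum>u\<in>A. \<Sum>v\<in>B'. d u cc + h cc v)"
      using eAB B'B by (intro sum.cong refl) auto
    also have "\<dots> = (\<Sum>u\<in>A. 5 * d u cc + (\<Sum>v\<in>B'. h cc v))"
      by (simp add: sum.distrib cardB')
    also have "\<dots> = (\<Sum>u\<in>A. 5 * d u cc + 9)"
      using sB'[of "h cc"] hs1[OF ccB] hcc by simp
    also have "\<dots> = 5 * (\<Sum>u\<in>A. d u cc) + 9 * card A"
      by (simp add: sum.distrib sum_distrib_left)
    finally show ?thesis unfolding DD_def A_def[symmetric] d_def cc_def cardA by simp
  qed
  have P3: "(\<Sum>u\<in>B'. \<Sum>v\<in>A. d' u v) = 5 * DD m + 9 * (5 * real m + 1)"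
  proof -
    have "(\<Sum>u\<in>B'. \<Sum>v\<in>A. d' u v) = (\<Sum>u\<in>B'. \<Sum>v\<in>A. d v cc + h cc u)"
      using eBA B'B by (intro sum.cong refl) auto
    also have "\<dots> = (\<Sum>u\<in>B'. (\<Sum>v\<in>A. d v cc) + card A * h cc u)"
      by (simp add: sum.distrib)
    also have "\<dots> = 5 * (\<Sum>v\<in>A. d v cc) + card A * (\<Sum>u\<in>B'. h cc u)"
      by (simp add: sum.distrib sum_distrib_left cardB')
    also have "(\<Sum>u\<in>B'. h cc u) = 9"
      using sB'[of "h cc"] hs1[OF ccB] hcc by simp
    finally show ?thesis unfolding DD_def A_def[symmetric] d_def cc_def cardA by simp
  qed
  have P4: "(\<Sum>u\<in>B'. \<Sum>v\<in>B'. d' u v) = 36"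
  proof -
    have "(\<Sum>u\<in>B'. \<Sum>v\<in>B'. d' u v) = (\<Sum>u\<in>B'. \<Sum>v\<in>B'. h u v)"
      using eB B'B by (intro sum.cong refl) auto
    also have "\<dots> = (\<Sum>u\<in>B'. 9 - h u cc)"
    proof (rule sum.cong[OF refl])
      fix u assume "u \<in> B'"
      then show "(\<Sum>v\<in>B'. h u v) = 9 - h u cc" using sB'[of "h u"] hs1 B'B by auto
    qed
    also have "\<dots> = 45 - (\<Sum>u\<in>B'. h u cc)"
      by (simp add: sum_subtractf cardB')
    also have "(\<Sum>u\<in>B'. h u cc) = 9"
      using sB'[of "\<lambda>u. h u cc"] hs2[OF ccB] hcc by simp
    finally show ?thesis by simp
  qed
  show ?thesis using TTs P1 P2 P3 P4 by simp
qed

lemma step_D: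
  assumes m: "1 \<le> m" "Suc m < N"
  shows "DD (Suc m) = DD m + 5 * real m * real (dist (hx H m) (c m) (c (Suc m))) + 9"
proof -
  have m2: "m < N" using m by simp
  define A where "A = vm H m"
  define B where "B = hs H m"
  define B' where "B' = hs H m - {c m}"
  define cc where "cc = c m"
  define c' where "c' = c (Suc m)"
  define d' where "d' = (\<lambda>u v. real (dist (am H (Suc m)) u v))"
  define d where "d = (\<lambda>u v. real (dist (am H m) u v))"
  define h where "h = (\<lambda>u v. real (dist (hx H m) u v))"
  note s = step_setup[OF m(1) m2]
  note cm = cm_in[OF m(1) m2]
  have c'B: "c' \<in> B" using cm_in[of "Suc m"] m unfolding c'_def B_def by simp
  have ccB: "cc \<in> B" using cm unfolding B_def cc_def by auto
  have B'B: "B' \<subseteq> B" unfolding B'_def B_def by auto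
  have cardA: "card A = 5 * m + 1" using s unfolding A_def by simp
  have hs2: "\<And>x. x \<in> B \<Longrightarrow> (\<Sum>y\<in>B. h y x) = 9" unfolding h_def B_def
    using hex_sum'[of H m, OF inj[OF m2]] by blast
  have sB': "\<And>f. (\<Sum>x\<in>B'. f x) = (\<Sum>x\<in>B. f x) - (f cc :: real)"
    unfolding B'_def B_def cc_def using sumB'[OF m(1) m2] by blast
  have eAB: "\<And>u v. u \<in> A \<Longrightarrow> v \<in> B \<Longrightarrow> d' u v = d u cc + h cc v"
    unfolding d'_def d_def h_def A_def B_def cc_def using dAB[OF m(1) m2] by simp
  have eB: "\<And>u v. u \<in> B \<Longrightarrow> v \<in> B \<Longrightarrow> d' u v = h u v"
    unfolding d'_def h_def B_def using dB[OF m(1) m2] by simp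
  have "DD (Suc m) = (\<Sum>x\<in>A. d' x c') + (\<Sum>x\<in>B'. d' x c')"
    unfolding DD_def sumU[OF m(1) m2] A_def B'_def d'_def c'_def by simp
  also have "(\<Sum>x\<in>A. d' x c') = (\<Sum>x\<in>A. d x cc + h cc c')"
    using eAB c'B by (intro sum.cong refl) auto
  also have "\<dots> = DD m + card A * h cc c'"
    unfolding DD_def A_def[symmetric] d_def cc_def by (simp add: sum.distrib)
  also have "(\<Sum>x\<in>B'. d' x c') = (\<Sum>x\<in>B'. h x c')"
    using eB c'B B'B by (intro sum.cong refl) auto
  also have "\<dots> = 9 - h cc c'" using sB'[of "\<lambda>x. h x c'"] hs2[OF c'B] by simp
  finally show ?thesis unfolding cardA h_def cc_def c'_def by (simp add: algebra_simps)
qed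

end




lemma sum_last: "1 \<le> (m::nat) \<Longrightarrow> (\<Sum>k=1..m. g k) = (\<Sum>k=1..m-1. g k) + (g m :: real)"
  by (cases m) (auto simp: sum.cl_ivl_Suc)

lemma swap_aux: "(\<Sum>k=1..n. \<Sum>i=1..k. F i) = (\<Sum>k=1..n. (real (Suc n) - real k) * (F k :: real))"
proof (induction n)
  case 0 then show ?case by simp
next
  case (Suc n)
  have "(\<Sum>k=1..Suc n. (real (Suc (Suc n)) - real k) * F k)
      = (\<Sum>k=1..Suc n. (real (Suc n) - real k) * F k + F k)"
    by (intro sum.cong refl) (simp add: algebra_simps)
  also have "\<dots> = (\<Sum>k=1..Suc n. (real (Suc n) - real k) * F k) + (\<Sum>k=1..Suc n. F k)"
    by (simp add: sum.distrib)
  also have "(\<Sum>k=1..Suc n. (real (Suc n) - real k) * F k) = (\<Sum>k=1..n. (real (Suc n) - real k) * F k)"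
    by (simp add: sum.cl_ivl_Suc)
  finally show ?case using Suc by (simp add: sum.cl_ivl_Suc)
qed

lemma swap_sum: "(\<Sum>k=1..n-1. \<Sum>i=1..k. F i) = (\<Sum>k=1..n-1. (real n - real k) * (F k :: real))"
proof (cases n)
  case 0 then show ?thesis by simp
next
  case (Suc n') then show ?thesis using swap_aux[of F n'] by simp
qed

context chain begin

lemma T1: "0 < N \<Longrightarrow> TT 1 = 54"
proof -
  assume N: "0 < N"
  have "TT 1 = (\<Sum>u\<in>hs H 0. \<Sum>v\<in>hs H 0. real (dist (hx H 0) u v))"
    unfolding TT_def vm_1 am_1 ..
  also have "\<dots> = (\<Sum>u\<in>hs H 0. 9)"
    using hex_sum[of H 0, OF inj[OF N]] by (intro sum.cong refl) blast
  also have "\<dots> = 54" using card_hs[OF N] by simp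
  finally show ?thesis .
qed

lemma D1: "1 < N \<Longrightarrow> DD 1 = 9"
proof -
  assume N: "1 < N"
  have c1: "c 1 \<in> hs H 0" using cm_in(3)[of 1] N by simp
  have "DD 1 = (\<Sum>x\<in>hs H 0. real (dist (hx H 0) x (c 1)))"
    unfolding DD_def vm_1 am_1 ..
  also have "\<dots> = 9" using hex_sum'[of H 0, OF inj c1] N by simp
  finally show ?thesis .
qed

lemma fc_step:
  assumes m: "1 \<le> m" "Suc m < N"
  shows "fc (am H N) c (Suc m) = 5 * real m * real (dist (hx H m) (c m) (c (Suc m))) + 9"
proof -
  have m2: "m < N" using m by simp
  note cm = cm_in[OF m(1) m2]
  have c'1: "c (Suc m) \<in> hs H m" "c (Suc m) \<in> hs H (Suc m)" using cm_in[of "Suc m"] m by simp_all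
  have mem: "c m \<in> vm H (Suc m)" "c (Suc m) \<in> vm H (Suc m)" using cm c'1 vm_Suc[of H m] by auto
  have e1: "dist (am H N) (c m) (c (Suc m)) = dist (am H (Suc m)) (c m) (c (Suc m))"
    using dist_inv[of "Suc m" N] m mem by simp
  have e2: "dist (am H (Suc m)) (c m) (c (Suc m)) = dist (hx H m) (c m) (c (Suc m))"
    using dB[OF m(1) m2 cm(2) c'1(1)] .
  obtain p where p: "p < 6" "c m = H m p" using cm(2) unfolding hs_def by blast
  obtain q where q: "q < 6" "c (Suc m) = H m q" using c'1(1) unfolding hs_def by blast
  have "hs H (m - 1) \<inter> hs H (Suc m) = {}" by (rule disj) (use m in simp_all)
  then have ne: "c m \<noteq> c (Suc m)" using cm(3) c'1(2) by (metis IntI empty_iff)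
  have "p \<noteq> q"
  proof
    assume "p = q" then have "c m = c (Suc m)" using p(2) q(2) by simp
    then show False using ne by simp
  qed
  have e3: "dist (hx H m) (c m) (c (Suc m)) = cyc p q"
    using hex_dist[of H m, OF inj[OF m2] p(1) q(1)] p q by simp
  have ne1: "Suc m \<noteq> 1" using m by simp
  have rs: "real (Suc m) - 1 = real m" by simp
  have dv: "dist (am H N) (c m) (c (Suc m)) = cyc p q" using e1 e2 e3 by simp
  have dv': "dist (hx H m) (c m) (c (Suc m)) = cyc p q" using e3 .
  from cyc_pos[OF p(1) q(1) \<open>p \<noteq> q\<close>]
  show ?thesis
  proof (elim disjE)
    assume h: "cyc p q = 1"
    show ?thesis using ne1 dv dv' h by (simp add: fc_def)
  next
    assume h: "cyc p q = 2"
    show ?thesis using ne1 dv dv' h by (simp add: fc_def)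
  next
    assume h: "cyc p q = 3"
    show ?thesis using ne1 dv dv' h by (simp add: fc_def)
  qed
qed

lemma D_closed: "1 \<le> m \<Longrightarrow> m < N \<Longrightarrow> DD m = (\<Sum>i=1..m. fc (am H N) c i)"
proof (induction m rule: nat_induct_at_least)
  case base then show ?case using D1 by (simp add: fc_def)
next
  case (Suc m)
  have "DD (Suc m) = DD m + fc (am H N) c (Suc m)"
    using step_D[of m] fc_step[of m] Suc by simp
  then show ?case using Suc by (simp add: sum.cl_ivl_Suc)
qed

lemma T_closed: "1 \<le> m \<Longrightarrow> m \<le> N \<Longrightarrow>
  TT m / 2 = 5 * (\<Sum>k=1..m-1. \<Sum>i=1..k. fc (am H N) c i) + 45 / 2 * (real m)^2 + 9 / 2 * real m"
proof (induction m rule: nat_induct_at_least)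
  case base then show ?case using T1 by simp
next
  case (Suc m)
  have mN: "m < N" using Suc by simp
  have "TT (Suc m) / 2 = TT m / 2 + 5 * DD m + 45 * real m + 27"
    using step_T[OF Suc.hyps mN] by simp
  also have "DD m = (\<Sum>i=1..m. fc (am H N) c i)" using D_closed Suc.hyps mN by simp
  also have "TT m / 2 = 5 * (\<Sum>k=1..m-1. \<Sum>i=1..k. fc (am H N) c i) + 45 / 2 * (real m)^2 + 9 / 2 * real m"
    using Suc mN by simp
  finally have "TT (Suc m) / 2 = 5 * ((\<Sum>k=1..m-1. \<Sum>i=1..k. fc (am H N) c i) + (\<Sum>i=1..m. fc (am H N) c i))
      + 45 / 2 * (real m)^2 + 9 / 2 * real m + 45 * real m + 27" by (simp add: algebra_simps)
  also have "(\<Sum>k=1..m-1. \<Sum>i=1..k. fc (am H N) c i) + (\<Sum>i=1..m. fc (am H N) c i)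
     = (\<Sum>k=1..Suc m - 1. \<Sum>i=1..k. fc (am H N) c i)"
    using sum_last[OF Suc.hyps, of "\<lambda>k. \<Sum>i=1..k. fc (am H N) c i"] by simp
  finally show ?case by (simp add: power2_eq_square algebra_simps)
qed

end

theorem theorem2p2:
  fixes V :: "'a set" and adj :: "'a \<Rightarrow> 'a \<Rightarrow> bool" and n :: nat
    and H :: "nat \<Rightarrow> nat \<Rightarrow> 'a" and c :: "nat \<Rightarrow> 'a"
  assumes "spiro_hex_chain V adj n H c"
  shows "wiener V adj = 5 * (\<Sum>k = 1..n - 1. \<Sum>i = 1..k. fc adj c i) + 45 / 2 * (real n)^2 + 9 / 2 * real n
       \<and> wiener V adj = 5 * (\<Sum>k = 1..n - 1. (real n - real k) * fc adj c k) + 45 / 2 * (real n)^2 + 9 / 2 * real n"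
proof -
  note a = assms[unfolded spiro_hex_chain_def]
  have n1: "1 \<le> n" using a by (rule conjunct1)
  note b1 = conjunct2[OF a]
  have a2: "\<forall>k<n. inj_on (H k) {..<6}" using b1 by (rule conjunct1)
  note b2 = conjunct2[OF b1]
  have a3: "V = (\<Union>k<n. H k ` {..<6})" using b2 by (rule conjunct1)
  note b3 = conjunct2[OF b2]
  have a4: "\<forall>u v. adj u v \<longleftrightarrow> (\<exists>k<n. \<exists>i<6. {u, v} = {H k i, H k ((i + 1) mod 6)})"
    using b3 by (rule conjunct1)
  note b4 = conjunct2[OF b3]
  have a5: "\<forall>k. 1 \<le> k \<and> k < n \<longrightarrow> H (k - 1) ` {..<6} \<inter> H k ` {..<6} = {c k}"
    using b4 by (rule conjunct1)
  have a6: "\<forall>j k. j < n \<and> k < n \<and> j + 2 \<le> k \<longrightarrow> H j ` {..<6} \<inter> H k ` {..<6} = {}"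
    using b4 by (rule conjunct2)
  interpret chain n H c
  proof
    fix k assume "k < n" then show "inj_on (H k) {..<6}" using a2 by simp
  next
    fix k assume "1 \<le> k" "k < n" then show "hs H (k - 1) \<inter> hs H k = {c k}"
      unfolding hs_def using a5 by simp
  next
    fix j k assume "j < n" "k < n" "j + 2 \<le> k" then show "hs H j \<inter> hs H k = {}"
      unfolding hs_def using a6 by simp
  qed
  have V: "V = vm H n" unfolding vm_def hs_def by (rule a3)
  have adj: "adj = am H n" unfolding am_def by (intro ext) (use a4 in simp)
  have W: "wiener V adj = TT n / 2" unfolding V adj TT_def
    by (rule wiener_sum[OF finite_vm]) (rule asym)
  have 1: "wiener V adj = 5 * (\<Sum>k = 1..n - 1. \<Sum>i = 1..k. fc adj c i) + 45 / 2 * (real n)^2 + 9 / 2 * real n"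
    unfolding W using T_closed[OF n1 order_refl] adj by simp
  show ?thesis using 1 swap_sum[of "fc adj c" n] by simp
qed


end
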